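(* Let $N=2^h$ with $h\ge 2$, $\Delta,\varepsilon>0$, $\sigma^2=2\Delta^2/\varepsilon^2$ and $V(N)=2(\log_2N-1)$. Consider the binary tree mechanism $\mathcal{T}_{N,\Delta,\varepsilon}$ applied to a sequence $(y_t)_{t\ge1}$ of nonnegative reals, and let $I$ be a set of consecutive indices. (1) If $|I|\le N/2$, there is an estimator $\hat S(I)$, equal to a sum of released noisy tree-node values, with $\mathbb{E}[\hat S(I)]=\sum_{t\in I}y_t$ and $\mathrm{Var}[\hat S(I)]\le V(N)\,\sigma^2$. (2) If $|I|>N/2$, write $|I|=kN/2+R$ with integers $k\ge1$ and $0\le R<N/2$. Then there is such an estimator, equal to a sum of released noisy values (possibly from several containers), with $\mathbb{E}[\hat S(I)]=\sum_{t\in I}y_t$ and $\mathrm{Var}[\hat S(I)]\le (k+V(N))\,\sigma^2$.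
   Context: Binary tree mechanism with shadow releases $\mathcal{T}_{N,\Delta,\varepsilon}$ ($N=2^h$) on an input sequence $(y_t)_{t\ge1}$: indices are partitioned into containers $C_k=\{(k-1)N+1,\dots,kN\}$, $k=1,2,\dots$. For each container, build a complete binary tree $\mathcal{B}_N$ whose leaves are the indices of $C_k$ in order; a node $v$ at depth $d$ (root at depth $0$) corresponds to a block of $2^{h-d}$ consecutive leaves, and $\mathrm{sum}(v)=\sum_{t\in\mathrm{leaves}(v)}y_t$. The mechanism releases $\tilde s(v)=\mathrm{sum}(v)+\eta_v$ for every node $v$ of every container's tree, and for each container $k$ one shadow release $\sum_{t=(k-1)N+N/2+1}^{kN}y_t+\eta'_k$, where all $\eta_v,\eta'_k$ are independent $\mathrm{Lap}(\Delta/\varepsilon)$ random variables (each of variance $2\Delta^2/\varepsilon^2$). *)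

theory Defs
  imports "HOL-Probability.Probability"
begin

text \<open>Labels of released values of the binary tree mechanism with shadow releases
  (N = 2^h).  TNode k d j: node at depth d (root depth 0), position j (0 \<le> j < 2^d,
  left to right) in the tree of container k (k \<ge> 1).  Shadow k: the shadow release
  of container k.\<close>
datatype rlabel = TNode nat nat nat | Shadow nat

fun valid_label :: "nat \<Rightarrow> rlabel \<Rightarrow> bool" where
  "valid_label h (TNode k d j) = (1 \<le> k \<and> d \<le> h \<and> j < 2 ^ d)"
| "valid_label h (Shadow k) = (1 \<le> k)"

text \<open>Indices summed by a released value (container C_k = {(k-1)N+1..kN}).\<close>
fun leaves :: "nat \<Rightarrow> rlabel \<Rightarrow> nat set" where
  "leaves h (TNode k d j) =
     {(k - 1) * 2 ^ h + j * 2 ^ (h - d) + 1 .. (k - 1) * 2 ^ h + (j + 1) * 2 ^ (h - d)}"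
| "leaves h (Shadow k) = {(k - 1) * 2 ^ h + 2 ^ h div 2 + 1 .. k * 2 ^ h}"

definition true_value :: "(nat \<Rightarrow> real) \<Rightarrow> nat \<Rightarrow> rlabel \<Rightarrow> real" where
  "true_value y h l = (\<Sum>t\<in>leaves h l. y t)"

definition released :: "(nat \<Rightarrow> real) \<Rightarrow> nat \<Rightarrow> (rlabel \<Rightarrow> 'a \<Rightarrow> real) \<Rightarrow> rlabel \<Rightarrow> 'a \<Rightarrow> real" where
  "released y h \<eta> l \<omega> = true_value y h l + \<eta> l \<omega>"

definition laplace_density :: "real \<Rightarrow> real \<Rightarrow> real" where
  "laplace_density b x = exp (- \<bar>x\<bar> / b) / (2 * b)"

end

theory Submission
  imports Defs
begin


lemma erl_hbi:
  fixes b :: real and i :: nat assumes b: "b > 0"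
  shows "has_bochner_integral lborel (\<lambda>x. erlang_density 0 (1/b) x * x ^ i) (fact i * b ^ i)"
proof (rule has_bochner_integral_nn_integral)
  show "AE x in lborel. 0 \<le> erlang_density 0 (1/b) x * x ^ i"
    using b by (intro AE_I2) (auto simp: erlang_density_def)
  show "(\<integral>\<^sup>+ x. ennreal (erlang_density 0 (1/b) x * x ^ i) \<partial>lborel) = ennreal (fact i * b ^ i)"
    using nn_integral_erlang_ith_moment[of "1/b" 0 i] b by (simp add: power_divide)
qed (use b in auto)

lemma lap_split:
  fixes b x :: real assumes b: "b > 0" and i: "i \<ge> 1"
  shows "laplace_density b x * x ^ i =
    (erlang_density 0 (1/b) x * x ^ i + (-1)^i * (erlang_density 0 (1/b) (0 + (-1) * x) * (0 + (-1) * x) ^ i)) / 2"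
proof -
  have "(-1::real)^i * (- x)^i = x ^ i"
    by (metis (no_types) mult_minus1 power_minus power_mult_distrib minus_minus mult_1)
  then show ?thesis using b i
    by (cases "x < 0"; cases "x = 0") (auto simp: erlang_density_def laplace_density_def field_simps exp_minus)
qed

lemma lap_moment:
  fixes b :: real and i :: nat assumes b: "b > 0" and i: "i \<ge> 1"
  shows "integrable lborel (\<lambda>x. laplace_density b x * x ^ i)"
    and "(\<integral>x. laplace_density b x * x ^ i \<partial>lborel) = (fact i * b ^ i + (-1)^i * (fact i * b ^ i)) / 2"
proof -
  let ?e = "\<lambda>x. erlang_density 0 (1/b) x * x ^ i"
  have I1: "integrable lborel ?e" and E1: "integral\<^sup>L lborel ?e = fact i * b ^ i"
    using erl_hbi[OF b, of i] by (auto simp: has_bochner_integral_iff)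
  have I2: "integrable lborel (\<lambda>x. ?e (0 + (-1) * x))"
    by (rule lborel_integrable_real_affine[OF I1]) simp
  have E2: "integral\<^sup>L lborel (\<lambda>x. ?e (0 + (-1) * x)) = fact i * b ^ i"
    using lborel_integral_real_affine[of "-1" ?e 0] E1 by simp
  have eq: "(\<lambda>x. laplace_density b x * x ^ i) = (\<lambda>x. (?e x + (-1)^i * ?e (0 + (-1) * x)) / 2)"
    using lap_split[OF b i] by auto
  show "integrable lborel (\<lambda>x. laplace_density b x * x ^ i)"
    unfolding eq using I1 I2 by auto
  show "(\<integral>x. laplace_density b x * x ^ i \<partial>lborel) = (fact i * b ^ i + (-1)^i * (fact i * b ^ i)) / 2"
    unfolding eq using I1 I2 E1 E2 by simp
qed

lemma (in prob_space) lap_rv: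
  assumes b: "b > 0" and D: "distributed M lborel X (\<lambda>x. ennreal (laplace_density b x))"
  shows "integrable M X" "expectation X = 0"
    "integrable M (\<lambda>\<omega>. X \<omega> * X \<omega>)" "expectation (\<lambda>\<omega>. X \<omega> * X \<omega>) = 2 * b\<^sup>2"
proof -
  have nn: "\<And>x. 0 \<le> laplace_density b x" using b by (simp add: laplace_density_def)
  have i1: "integrable lborel (\<lambda>x. laplace_density b x * x ^ 1)" by (rule lap_moment(1)[OF b]) simp
  have i2: "integrable lborel (\<lambda>x. laplace_density b x * x ^ 2)" by (rule lap_moment(1)[OF b]) simp
  have e1: "(\<integral>x. laplace_density b x * x ^ 1 \<partial>lborel) = 0" using lap_moment(2)[OF b, of 1] by simp
  have e2: "(\<integral>x. laplace_density b x * x ^ 2 \<partial>lborel) = 2 * b\<^sup>2" using lap_moment(2)[OF b, of 2] by simp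
  show "integrable M X"
    using distributed_integrable[OF D, of "\<lambda>x. x ^ 1"] nn i1 by simp
  show "expectation X = 0"
    using distributed_integral[OF D, of "\<lambda>x. x ^ 1"] nn e1 by simp
  show "integrable M (\<lambda>\<omega>. X \<omega> * X \<omega>)"
    using distributed_integrable[OF D, of "\<lambda>x. x ^ 2"] nn i2 by (simp add: power2_eq_square)
  show "expectation (\<lambda>\<omega>. X \<omega> * X \<omega>) = 2 * b\<^sup>2"
    using distributed_integral[OF D, of "\<lambda>x. x ^ 2"] nn e2 by (simp add: power2_eq_square)
qed

lemma (in prob_space) sum_lap:
  fixes c :: "'i \<Rightarrow> real"
  assumes b: "b > 0" and L: "finite L" and ind: "indep_vars (\<lambda>_. borel) \<eta> L"
    and D: "\<And>l. l \<in> L \<Longrightarrow> distributed M lborel (\<eta> l) (\<lambda>x. ennreal (laplace_density b x))"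
  shows "expectation (\<lambda>\<omega>. \<Sum>l\<in>L. c l + \<eta> l \<omega>) = (\<Sum>l\<in>L. c l)"
    and "variance (\<lambda>\<omega>. \<Sum>l\<in>L. c l + \<eta> l \<omega>) = real (card L) * (2 * b\<^sup>2)"
proof -
  note r = lap_rv[OF b D]
  have ex: "expectation (\<lambda>\<omega>. \<Sum>l\<in>L. c l + \<eta> l \<omega>) = (\<Sum>l\<in>L. c l)"
    using L r by (simp add: Bochner_Integration.integral_sum Bochner_Integration.integral_add prob_space)
  then show "expectation (\<lambda>\<omega>. \<Sum>l\<in>L. c l + \<eta> l \<omega>) = (\<Sum>l\<in>L. c l)" .
  have sq: "((\<Sum>l\<in>L. c l + \<eta> l \<omega>) - (\<Sum>l\<in>L. c l))\<^sup>2 = (\<Sum>i\<in>L. \<Sum>j\<in>L. \<eta> i \<omega> * \<eta> j \<omega>)" for \<omega>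
    by (simp add: sum.distrib power2_eq_square sum_product)
  have int: "integrable M (\<lambda>\<omega>. \<eta> i \<omega> * \<eta> j \<omega>)" and
     ev: "expectation (\<lambda>\<omega>. \<eta> i \<omega> * \<eta> j \<omega>) = (if i = j then 2 * b\<^sup>2 else 0)"
    if "i \<in> L" "j \<in> L" for i j
  proof -
    have "integrable M (\<lambda>\<omega>. \<eta> i \<omega> * \<eta> j \<omega>) \<and> expectation (\<lambda>\<omega>. \<eta> i \<omega> * \<eta> j \<omega>) = (if i = j then 2 * b\<^sup>2 else 0)"
    proof (cases "i = j")
      case True then show ?thesis using r that by simp
    next
      case False
      have ind2: "indep_vars (\<lambda>_. borel) \<eta> {i, j}" by (rule indep_vars_subset[OF ind]) (use that in auto)
      have i2: "\<And>k. k \<in> {i,j} \<Longrightarrow> integrable M (\<eta> k)" using r that by auto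
      show ?thesis
        using indep_vars_lebesgue_integral[OF _ ind2 i2] indep_vars_integrable[OF _ ind2 i2] False r that
        by simp
    qed
    then show "integrable M (\<lambda>\<omega>. \<eta> i \<omega> * \<eta> j \<omega>)"
      "expectation (\<lambda>\<omega>. \<eta> i \<omega> * \<eta> j \<omega>) = (if i = j then 2 * b\<^sup>2 else 0)" by auto
  qed
  have "variance (\<lambda>\<omega>. \<Sum>l\<in>L. c l + \<eta> l \<omega>) = expectation (\<lambda>\<omega>. \<Sum>i\<in>L. \<Sum>j\<in>L. \<eta> i \<omega> * \<eta> j \<omega>)"
    unfolding ex sq ..
  also have "\<dots> = (\<Sum>i\<in>L. \<Sum>j\<in>L. expectation (\<lambda>\<omega>. \<eta> i \<omega> * \<eta> j \<omega>))"
    using int by (simp add: Bochner_Integration.integral_sum)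
  also have "\<dots> = (\<Sum>i\<in>L. \<Sum>j\<in>L. (if i = j then 2 * b\<^sup>2 else 0))"
    using ev by (intro sum.cong) auto
  also have "\<dots> = real (card L) * (2 * b\<^sup>2)" using L by simp
  finally show "variance (\<lambda>\<omega>. \<Sum>l\<in>L. c l + \<eta> l \<omega>) = real (card L) * (2 * b\<^sup>2)" .
qed



definition blk :: "nat \<times> nat \<Rightarrow> nat set" where
  "blk b = {snd b * 2 ^ fst b ..< (snd b + 1) * 2 ^ fst b}"

definition dec :: "nat \<Rightarrow> (nat \<times> nat) set \<Rightarrow> nat set \<Rightarrow> bool" where
  "dec h D S \<longleftrightarrow> finite D \<and> (\<forall>b\<in>D. fst b \<le> h) \<and> disjoint_family_on blk D \<and> \<Union>(blk ` D) = S"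

lemma dec_empty: "dec h {} {}"
  by (simp add: dec_def disjoint_family_on_def)

lemma dec_single: "e \<le> h \<Longrightarrow> dec h {(e, q)} {q * 2 ^ e ..< (q + 1) * 2 ^ e}"
  by (simp add: dec_def disjoint_family_on_def blk_def)

lemma dec_union:
  assumes "dec h D1 S1" "dec h D2 S2" "S1 \<inter> S2 = {}"
  shows "dec h (D1 \<union> D2) (S1 \<union> S2)"
proof -
  have "disjoint_family_on blk (D1 \<union> D2)"
    unfolding disjoint_family_on_def
  proof (intro ballI impI)
    fix i j assume ij: "i \<in> D1 \<union> D2" "j \<in> D1 \<union> D2" "i \<noteq> j"
    have s1: "\<And>x. x \<in> D1 \<Longrightarrow> blk x \<subseteq> S1" and s2: "\<And>x. x \<in> D2 \<Longrightarrow> blk x \<subseteq> S2"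
      using assms(1,2) unfolding dec_def by auto
    have d1: "disjoint_family_on blk D1" and d2: "disjoint_family_on blk D2"
      using assms(1,2) unfolding dec_def by auto
    show "blk i \<inter> blk j = {}"
      using ij s1 s2 d1 d2 assms(3) unfolding disjoint_family_on_def by blast
  qed
  then show ?thesis using assms unfolding dec_def by auto
qed

lemma dec_union_card:
  assumes "dec h D1 S1" "dec h D2 S2" "S1 \<inter> S2 = {}" "card D1 \<le> x" "card D2 \<le> y"
  shows "\<exists>D. dec h D (S1 \<union> S2) \<and> card D \<le> x + y"
proof -
  have "card (D1 \<union> D2) \<le> card D1 + card D2" by (rule card_Un_le)
  then show ?thesis using dec_union[OF assms(1-3)] assms(4,5) by (intro exI[of _ "D1 \<union> D2"]) auto
qed

lemma dec_pre:
  "g \<le> h \<Longrightarrow> r \<le> 2 ^ g \<Longrightarrow>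
   \<exists>D. dec h D {c * 2 ^ g ..< c * 2 ^ g + r} \<and> card D \<le> (if r < 2 ^ g then g else 1)"
proof (induction g arbitrary: c r)
  case 0
  show ?case
  proof (cases "r = 0")
    case True then show ?thesis using dec_empty by (intro exI[of _ "{}"]) auto
  next
    case False then have "r = 1" using 0 by auto
    then show ?thesis using dec_single[of 0 h c] by (intro exI[of _ "{(0, c)}"]) auto
  qed
next
  case (Suc g)
  define p :: nat where "p = 2 ^ g"
  have p2: "2 ^ Suc g = 2 * p" by (simp add: p_def)
  have gh: "g \<le> h" using Suc by auto
  show ?case
  proof (cases "r = 2 ^ Suc g")
    case True
    then show ?thesis using dec_single[of "Suc g" h c] Suc.prems
      by (intro exI[of _ "{(Suc g, c)}"]) (auto simp: algebra_simps)
  next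
    case False
    then have rl: "r < 2 * p" using Suc.prems p2 by auto
    show ?thesis
    proof (cases "r < p")
      case True
      obtain D where D: "dec h D {(2 * c) * p ..< (2 * c) * p + r}" "card D \<le> g"
        using Suc.IH[OF gh, of r "2 * c"] True by (auto simp: p_def)
      then show ?thesis using rl p2 by (intro exI[of _ D]) (auto simp: algebra_simps)
    next
      case False
      have lt: "r - p < 2 ^ g" using rl False by (simp add: p_def)
      obtain D where D: "dec h D {(2 * c + 1) * p ..< (2 * c + 1) * p + (r - p)}" "card D \<le> g"
        using Suc.IH[OF gh less_imp_le[OF lt], of "2 * c + 1"] lt unfolding p_def by auto
      have S: "dec h {(g, 2 * c)} {(2 * c) * p ..< (2 * c + 1) * p}"
        using dec_single[OF gh, of "2 * c"] by (simp add: p_def)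
      obtain D' where "dec h D' ({(2 * c) * p ..< (2 * c + 1) * p} \<union> {(2 * c + 1) * p ..< (2 * c + 1) * p + (r - p)})"
        "card D' \<le> 1 + g"
        using dec_union_card[OF S D(1) _ _ D(2), of 1] by auto
      moreover have "{(2 * c) * p ..< (2 * c + 1) * p} \<union> {(2 * c + 1) * p ..< (2 * c + 1) * p + (r - p)}
          = {c * 2 ^ Suc g ..< c * 2 ^ Suc g + r}"
        using False p2 by (auto simp: algebra_simps)
      ultimately show ?thesis using rl p2 by (intro exI[of _ D']) auto
    qed
  qed
qed

lemma dec_suf:
  "g \<le> h \<Longrightarrow> r \<le> 2 ^ g \<Longrightarrow>
   \<exists>D. dec h D {c * 2 ^ g + 2 ^ g - r ..< c * 2 ^ g + 2 ^ g} \<and> card D \<le> (if r < 2 ^ g then g else 1)"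
proof (induction g arbitrary: c r)
  case 0
  show ?case
  proof (cases "r = 0")
    case True then show ?thesis using dec_empty by (intro exI[of _ "{}"]) auto
  next
    case False then have "r = 1" using 0 by auto
    then show ?thesis using dec_single[of 0 h c] by (intro exI[of _ "{(0, c)}"]) auto
  qed
next
  case (Suc g)
  define p :: nat where "p = 2 ^ g"
  have p2: "2 ^ Suc g = 2 * p" by (simp add: p_def)
  have gh: "g \<le> h" using Suc by auto
  show ?case
  proof (cases "r = 2 ^ Suc g")
    case True
    then show ?thesis using dec_single[of "Suc g" h c] Suc.prems
      by (intro exI[of _ "{(Suc g, c)}"]) (auto simp: algebra_simps)
  next
    case False
    then have rl: "r < 2 * p" using Suc.prems p2 by auto
    show ?thesis
    proof (cases "r < p")
      case True
      obtain D where D: "dec h D {(2 * c + 1) * p + p - r ..< (2 * c + 1) * p + p}" "card D \<le> g"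
        using Suc.IH[OF gh, of r "2 * c + 1"] True by (auto simp: p_def)
      moreover have "{(2 * c + 1) * p + p - r ..< (2 * c + 1) * p + p} = {c * 2 ^ Suc g + 2 ^ Suc g - r..<c * 2 ^ Suc g + 2 ^ Suc g}"
        using p2 by (simp add: algebra_simps)
      ultimately show ?thesis using rl p2 by (intro exI[of _ D]) auto
    next
      case False
      have lt: "r - p < 2 ^ g" using rl False by (simp add: p_def)
      obtain D where D: "dec h D {(2 * c) * p + p - (r - p) ..< (2 * c) * p + p}" "card D \<le> g"
        using Suc.IH[OF gh less_imp_le[OF lt], of "2 * c"] lt unfolding p_def by auto
      have S: "dec h {(g, 2 * c + 1)} {(2 * c + 1) * p ..< (2 * c + 1 + 1) * p}"
        using dec_single[OF gh, of "2 * c + 1"] by (simp add: p_def)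
      obtain D' where "dec h D' ({(2 * c) * p + p - (r - p) ..< (2 * c) * p + p} \<union> {(2 * c + 1) * p ..< (2 * c + 1 + 1) * p})"
        "card D' \<le> g + 1"
        using dec_union_card[OF D(1) S _ D(2), of 1] by auto
      moreover have "{(2 * c) * p + p - (r - p) ..< (2 * c) * p + p} \<union> {(2 * c + 1) * p ..< (2 * c + 1 + 1) * p}
          = {c * 2 ^ Suc g + 2 ^ Suc g - r..<c * 2 ^ Suc g + 2 ^ Suc g}"
        using False rl p2 by (auto simp: algebra_simps)
      ultimately show ?thesis using rl p2 by (intro exI[of _ D']) auto
    qed
  qed
qed

lemma dec_within:
  "g \<le> h \<Longrightarrow> n < 2 ^ g \<Longrightarrow> c * 2 ^ g \<le> s \<Longrightarrow> s + n \<le> c * 2 ^ g + 2 ^ g \<Longrightarrow>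
   \<exists>D. dec h D {s ..< s + n} \<and> card D \<le> 2 * g"
proof (induction g arbitrary: c s n)
  case 0
  then show ?case using dec_empty by (intro exI[of _ "{}"]) auto
next
  case (Suc g)
  define p :: nat where "p = 2 ^ g"
  have p2: "2 ^ Suc g = 2 * p" by (simp add: p_def)
  have gh: "g \<le> h" using Suc by auto
  define mid where "mid = (2 * c) * p + p"
  show ?case
  proof (cases "s \<le> mid \<and> mid \<le> s + n")
    case True
    have r1: "mid - s \<le> 2 ^ g" using True Suc.prems p2 by (simp add: mid_def p_def algebra_simps)
    have r2: "s + n - mid \<le> 2 ^ g" using True Suc.prems p2 by (simp add: mid_def p_def algebra_simps)
    obtain D1 where D1: "dec h D1 {(2 * c) * 2 ^ g + 2 ^ g - (mid - s) ..< (2 * c) * 2 ^ g + 2 ^ g}"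
       "card D1 \<le> (if mid - s < 2 ^ g then g else 1)"
      using dec_suf[OF gh r1] by blast
    obtain D2 where D2: "dec h D2 {(2 * c + 1) * 2 ^ g ..< (2 * c + 1) * 2 ^ g + (s + n - mid)}"
       "card D2 \<le> (if s + n - mid < 2 ^ g then g else 1)"
      using dec_pre[OF gh r2] by blast
    have e1: "{(2 * c) * 2 ^ g + 2 ^ g - (mid - s) ..< (2 * c) * 2 ^ g + 2 ^ g} = {s..<mid}"
      using True by (simp add: mid_def p_def)
    have e2: "{(2 * c + 1) * 2 ^ g ..< (2 * c + 1) * 2 ^ g + (s + n - mid)} = {mid..<s+n}"
      using True by (simp add: mid_def p_def algebra_simps)
    have c1: "card D1 \<le> Suc g" and c2: "card D2 \<le> Suc g" using D1(2) D2(2) by (auto split: if_splits)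
    obtain D where "dec h D ({s..<mid} \<union> {mid..<s+n})" "card D \<le> Suc g + Suc g"
      using dec_union_card[OF D1(1)[unfolded e1] D2(1)[unfolded e2] _ c1 c2] by auto
    moreover have "{s..<mid} \<union> {mid..<s+n} = {s..<s+n}" using True by auto
    ultimately show ?thesis by (intro exI[of _ D]) auto
  next
    case False
    then consider "mid < s" | "s + n < mid" by linarith
    then show ?thesis
    proof cases
      case 1
      have "\<exists>D. dec h D {s ..< s + n} \<and> card D \<le> 2 * g"
        by (rule Suc.IH[OF gh, of n "2 * c + 1" s]) (use 1 Suc.prems p2 in \<open>auto simp: mid_def p_def algebra_simps\<close>)
      then show ?thesis by auto
    next
      case 2
      have "\<exists>D. dec h D {s ..< s + n} \<and> card D \<le> 2 * g"
        by (rule Suc.IH[OF gh, of n "2 * c" s]) (use 2 Suc.prems p2 in \<open>auto simp: mid_def p_def algebra_simps\<close>)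
      then show ?thesis by auto
    qed
  qed
qed

lemma dec_full:
  "g \<le> h \<Longrightarrow> \<exists>D. dec h D {c * 2 ^ g ..< c * 2 ^ g + q * 2 ^ g} \<and> card D \<le> q"
proof (induction q)
  case 0
  then show ?case using dec_empty by (intro exI[of _ "{}"]) auto
next
  case (Suc q)
  obtain D where D: "dec h D {c * 2 ^ g ..< c * 2 ^ g + q * 2 ^ g}" "card D \<le> q" using Suc by blast
  have S: "dec h {(g, c + q)} {(c + q) * 2 ^ g ..< (c + q + 1) * 2 ^ g}" by (rule dec_single) (use Suc in auto)
  obtain D' where "dec h D' ({c * 2 ^ g ..< c * 2 ^ g + q * 2 ^ g} \<union> {(c + q) * 2 ^ g ..< (c + q + 1) * 2 ^ g})"
     "card D' \<le> q + 1"
    using dec_union_card[OF D(1) S _ D(2), of 1] by (auto simp: algebra_simps)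
  moreover have "{c * 2 ^ g ..< c * 2 ^ g + q * 2 ^ g} \<union> {(c + q) * 2 ^ g ..< (c + q + 1) * 2 ^ g}
     = {c * 2 ^ g ..< c * 2 ^ g + Suc q * 2 ^ g}" by (auto simp: algebra_simps)
  ultimately show ?case by (intro exI[of _ D']) auto
qed

lemma dec_main1:
  assumes "1 \<le> g" "g \<le> h" "n \<le> 2 ^ g"
  shows "\<exists>D. dec h D {s ..< s + n} \<and> card D \<le> 2 * g"
proof -
  define c where "c = s div 2 ^ g"
  have C1: "c * 2 ^ g \<le> s" unfolding c_def by (simp add: div_times_less_eq_dividend)
  have C2: "s < c * 2 ^ g + 2 ^ g" unfolding c_def
    by (metis add.commute div_mult_mod_eq mod_less_divisor nat_add_left_cancel_less pos2 zero_less_power)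
  show ?thesis
  proof (cases "s + n \<le> c * 2 ^ g + 2 ^ g")
    case True
    show ?thesis
    proof (cases "n < 2 ^ g")
      case True2: True
      show ?thesis by (rule dec_within[OF assms(2) True2 C1 True])
    next
      case False
      then have n: "n = 2 ^ g" using assms by auto
      then have s: "s = c * 2 ^ g" using True C1 by auto
      obtain D where "dec h D {c * 2 ^ g ..< c * 2 ^ g + 2 ^ g}" "card D \<le> 1"
        using dec_pre[OF assms(2), of "2 ^ g" c] by auto
      then show ?thesis using n s assms(1) by (intro exI[of _ D]) auto
    qed
  next
    case False
    define m where "m = c * 2 ^ g + 2 ^ g"
    have r1: "m - s < 2 ^ g" using False C1 assms C2 unfolding m_def by arith
    have r2: "s + n - m < 2 ^ g" using False C1 C2 assms unfolding m_def by linarith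
    obtain D1 where D1: "dec h D1 {c * 2 ^ g + 2 ^ g - (m - s) ..< c * 2 ^ g + 2 ^ g}" "card D1 \<le> g"
      using dec_suf[OF assms(2) less_imp_le[OF r1], of c] r1 by auto
    obtain D2 where D2: "dec h D2 {(c + 1) * 2 ^ g ..< (c + 1) * 2 ^ g + (s + n - m)}" "card D2 \<le> g"
      using dec_pre[OF assms(2) less_imp_le[OF r2], of "c + 1"] r2 by auto
    have e1: "{c * 2 ^ g + 2 ^ g - (m - s) ..< c * 2 ^ g + 2 ^ g} = {s..<m}" using C2 by (simp add: m_def)
    have e2: "{(c + 1) * 2 ^ g ..< (c + 1) * 2 ^ g + (s + n - m)} = {m..<s+n}" using False by (simp add: m_def add.commute)
    obtain D where "dec h D ({s..<m} \<union> {m..<s+n})" "card D \<le> g + g"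
      using dec_union_card[OF D1(1)[unfolded e1] D2(1)[unfolded e2] _ D1(2) D2(2)] by auto
    moreover have "{s..<m} \<union> {m..<s+n} = {s..<s+n}" using False C2 by (auto simp: m_def)
    ultimately show ?thesis by (intro exI[of _ D]) auto
  qed
qed

lemma dec_main2:
  assumes "1 \<le> g" "g \<le> h" "n = k * 2 ^ g + R" "R < 2 ^ g" "1 \<le> k"
  shows "\<exists>D. dec h D {s ..< s + n} \<and> card D \<le> k + 2 * g"
proof -
  define c where "c = s div 2 ^ g"
  have C1: "c * 2 ^ g \<le> s" unfolding c_def by (simp add: div_times_less_eq_dividend)
  have C2: "s < c * 2 ^ g + 2 ^ g" unfolding c_def
    by (metis add.commute div_mult_mod_eq mod_less_divisor nat_add_left_cancel_less pos2 zero_less_power)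
  define m where "m = c * 2 ^ g + 2 ^ g"
  have kn: "2 ^ g \<le> n" using assms(3,5) by (metis le_add1 le_add2 mult_le_mono1 mult_1 order_trans)
  have r1: "m - s \<le> 2 ^ g" using C1 unfolding m_def by linarith
  have ms: "m \<le> s + n" using r1 kn C2 unfolding m_def by linarith
  define len where "len = s + n - m"
  define q where "q = len div 2 ^ g"
  define r2 where "r2 = len mod 2 ^ g"
  have r2l: "r2 < 2 ^ g" unfolding r2_def by simp
  have lenq: "len = q * 2 ^ g + r2" unfolding q_def r2_def by (metis div_mult_mod_eq)
  have "len < (k + 1) * 2 ^ g" using assms(3,4) C2 ms unfolding len_def m_def by (simp add: algebra_simps)
  then have qk: "q \<le> k" unfolding q_def
    by (metis less_Suc_eq_le less_mult_imp_div_less Suc_eq_plus1)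
  obtain D1 where D1: "dec h D1 {c * 2 ^ g + 2 ^ g - (m - s) ..< c * 2 ^ g + 2 ^ g}" "card D1 \<le> g"
    using dec_suf[OF assms(2) r1, of c] assms(1) by (auto split: if_splits)
  obtain D2 where D2: "dec h D2 {(c + 1) * 2 ^ g ..< (c + 1) * 2 ^ g + q * 2 ^ g}" "card D2 \<le> q"
    using dec_full[OF assms(2)] by blast
  obtain D3 where D3: "dec h D3 {(c + 1 + q) * 2 ^ g ..< (c + 1 + q) * 2 ^ g + r2}" "card D3 \<le> g"
    using dec_pre[OF assms(2) less_imp_le[OF r2l], of "c + 1 + q"] r2l by auto
  have e1: "{c * 2 ^ g + 2 ^ g - (m - s) ..< c * 2 ^ g + 2 ^ g} = {s..<m}" using C2 by (simp add: m_def)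
  have e2: "{(c + 1) * 2 ^ g ..< (c + 1) * 2 ^ g + q * 2 ^ g} = {m..<m + q * 2 ^ g}" by (simp add: m_def algebra_simps)
  have e3: "{(c + 1 + q) * 2 ^ g ..< (c + 1 + q) * 2 ^ g + r2} = {m + q * 2 ^ g..<s + n}"
    using lenq ms unfolding len_def m_def by (auto simp: algebra_simps)
  obtain D4 where D4: "dec h D4 ({s..<m} \<union> {m..<m + q * 2 ^ g})" "card D4 \<le> g + q"
    using dec_union_card[OF D1(1)[unfolded e1] D2(1)[unfolded e2] _ D1(2) D2(2)] by auto
  have u1: "{s..<m} \<union> {m..<m + q * 2 ^ g} = {s..<m + q * 2 ^ g}" using C2 by (auto simp: m_def)
  obtain D where D: "dec h D ({s..<m + q * 2 ^ g} \<union> {m + q * 2 ^ g..<s + n})" "card D \<le> g + q + g"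
    using dec_union_card[OF D4(1)[unfolded u1] D3(1)[unfolded e3] _ D4(2) D3(2)] by auto
  have u2: "{s..<m + q * 2 ^ g} \<union> {m + q * 2 ^ g..<s + n} = {s..<s+n}"
    using lenq ms C2 unfolding len_def m_def by auto
  show ?thesis using D qk u2 by (intro exI[of _ D]) auto
qed


definition lab :: "nat \<Rightarrow> nat \<times> nat \<Rightarrow> rlabel" where
  "lab h b = TNode (snd b div 2 ^ (h - fst b) + 1) (h - fst b) (snd b mod 2 ^ (h - fst b))"

lemma lab_valid: "fst b \<le> h \<Longrightarrow> valid_label h (lab h b)"
  by (simp add: lab_def)

lemma lab_leaves:
  assumes "fst b \<le> h" shows "leaves h (lab h b) = Suc ` blk b"
proof -
  obtain e q where b: "b = (e, q)" by (cases b)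
  define P :: nat where "P = 2 ^ (h - e)"
  define Q :: nat where "Q = 2 ^ e"
  have hPQ: "(2::nat) ^ h = P * Q" unfolding P_def Q_def using assms b by (simp flip: power_add)
  have hd: "h - (h - e) = e" using assms b by simp
  have key: "q div P * (P * Q) + q mod P * Q = q * Q"
    by (metis div_mult_mod_eq distrib_right mult.assoc mult.commute)
  have "leaves h (lab h b) = {q * Q + 1 .. q * Q + Q}"
    unfolding b lab_def using key hPQ hd
    by (simp add: P_def[symmetric] Q_def[symmetric] algebra_simps)
  also have "\<dots> = Suc ` blk b"
    unfolding b blk_def by (simp add: Q_def atLeastLessThanSuc_atLeastAtMost algebra_simps)
  finally show ?thesis .
qed

lemma lab_inj: "inj_on (lab h) {b. fst b \<le> h}"
proof
  fix x y assume x: "x \<in> {b. fst b \<le> h}" and y: "y \<in> {b. fst b \<le> h}" and eq: "lab h x = lab h y"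
  obtain e q where xe: "x = (e, q)" by (cases x)
  obtain e' q' where ye: "y = (e', q')" by (cases y)
  have ee: "e = e'" using eq x y unfolding xe ye lab_def by auto
  then have "q div 2 ^ (h - e) = q' div 2 ^ (h - e)" "q mod 2 ^ (h - e) = q' mod 2 ^ (h - e)"
    using eq unfolding xe ye lab_def by auto
  then have "q = q'" by (metis div_mult_mod_eq)
  then show "x = y" using ee xe ye by simp
qed

lemma finish:
  fixes y :: "nat \<Rightarrow> real" and \<eta> :: "rlabel \<Rightarrow> 'a \<Rightarrow> real" and b :: real
  assumes D: "dec h D {a - 1 ..< a - 1 + n}" and a: "a \<ge> 1" and b: "b > 0"
    and P: "prob_space M"
    and ind: "prob_space.indep_vars M (\<lambda>_. borel) \<eta> {l. valid_label h l}"
    and dist: "\<forall>l. valid_label h l \<longrightarrow> distributed M lborel (\<eta> l) (\<lambda>x. ennreal (laplace_density b x))"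
  shows "\<exists>L. finite L \<and> L \<subseteq> {l. valid_label h l} \<and>
     prob_space.expectation M (\<lambda>\<omega>. \<Sum>l\<in>L. released y h \<eta> l \<omega>) = (\<Sum>t\<in>{a..<a+n}. y t) \<and>
     prob_space.variance M (\<lambda>\<omega>. \<Sum>l\<in>L. released y h \<eta> l \<omega>) = real (card D) * (2 * b\<^sup>2)"
proof -
  interpret prob_space M by (rule P)
  have fD: "finite D" and hD: "\<And>x. x \<in> D \<Longrightarrow> fst x \<le> h" and dj: "disjoint_family_on blk D"
    and un: "\<Union>(blk ` D) = {a - 1 ..< a - 1 + n}"
    using D unfolding dec_def by auto
  define L where "L = lab h ` D"
  have inj: "inj_on (lab h) D" by (rule inj_on_subset[OF lab_inj]) (use hD in auto)
  have fL: "finite L" unfolding L_def using fD by simp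
  have sL: "L \<subseteq> {l. valid_label h l}" unfolding L_def using hD lab_valid by auto
  have cL: "card L = card D" unfolding L_def using card_image[OF inj] .
  have indL: "indep_vars (\<lambda>_. borel) \<eta> L" by (rule indep_vars_subset[OF ind sL])
  have dL: "\<And>l. l \<in> L \<Longrightarrow> distributed M lborel (\<eta> l) (\<lambda>x. ennreal (laplace_density b x))"
    using dist sL by auto
  have rel: "(\<lambda>\<omega>. \<Sum>l\<in>L. released y h \<eta> l \<omega>) = (\<lambda>\<omega>. \<Sum>l\<in>L. true_value y h l + \<eta> l \<omega>)"
    by (simp add: released_def)
  have "(\<Sum>l\<in>L. true_value y h l) = (\<Sum>x\<in>D. true_value y h (lab h x))"
    unfolding L_def using sum.reindex[OF inj, of "true_value y h"] by (simp add: comp_def)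
  also have "\<dots> = (\<Sum>x\<in>D. \<Sum>t\<in>blk x. y (Suc t))"
    by (intro sum.cong refl) (simp add: true_value_def lab_leaves hD sum.reindex)
  also have "\<dots> = (\<Sum>t\<in>\<Union>(blk ` D). y (Suc t))"
    by (rule sum.UNION_disjoint[symmetric]) (use fD dj in \<open>auto simp: blk_def disjoint_family_on_def\<close>)
  also have "\<dots> = (\<Sum>t\<in>{a - 1 ..< a - 1 + n}. y (Suc t))" by (simp add: un)
  also have "\<dots> = (\<Sum>t\<in>Suc ` {a - 1 ..< a - 1 + n}. y t)" by (subst sum.reindex) (auto simp: comp_def)
  also have "Suc ` {a - 1 ..< a - 1 + n} = {a..<a+n}" using a by simp
  finally have sumeq: "(\<Sum>l\<in>L. true_value y h l) = (\<Sum>t\<in>{a..<a+n}. y t)" .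
  show ?thesis
    using sum_lap[OF b fL indL dL, of "true_value y h"] sumeq cL fL sL rel
    by (intro exI[of _ L]) (auto simp: released_def)
qed

theorem mainTheorem3:
  fixes h :: nat and \<Delta> \<epsilon> :: real and y :: "nat \<Rightarrow> real" and a n :: nat
    and M :: "'a measure" and \<eta> :: "rlabel \<Rightarrow> 'a \<Rightarrow> real"
  assumes "h \<ge> 2" and "\<Delta> > 0" and "\<epsilon> > 0"
    and "\<forall>t. 0 \<le> y t"
    and "a \<ge> 1"
    and "prob_space M"
    and "prob_space.indep_vars M (\<lambda>_. borel) \<eta> {l. valid_label h l}"
    and "\<forall>l. valid_label h l \<longrightarrow>
           distributed M lborel (\<eta> l) (\<lambda>x. ennreal (laplace_density (\<Delta> / \<epsilon>) x))"
  shows "(n \<le> 2 ^ h div 2 \<longrightarrow>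
            (\<exists>L. finite L \<and> L \<subseteq> {l. valid_label h l} \<and>
               prob_space.expectation M (\<lambda>\<omega>. \<Sum>l\<in>L. released y h \<eta> l \<omega>) = (\<Sum>t\<in>{a..<a+n}. y t) \<and>
               prob_space.variance M (\<lambda>\<omega>. \<Sum>l\<in>L. released y h \<eta> l \<omega>)
                 \<le> (2 * (log 2 (2 ^ h) - 1)) * (2 * \<Delta>\<^sup>2 / \<epsilon>\<^sup>2)))
       \<and> (n > 2 ^ h div 2 \<longrightarrow>
            (\<forall>k R :: nat. n = k * (2 ^ h div 2) + R \<longrightarrow> 1 \<le> k \<longrightarrow> R < 2 ^ h div 2 \<longrightarrow>
              (\<exists>L. finite L \<and> L \<subseteq> {l. valid_label h l} \<and>
                 prob_space.expectation M (\<lambda>\<omega>. \<Sum>l\<in>L. released y h \<eta> l \<omega>) = (\<Sum>t\<in>{a..<a+n}. y t) \<and>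
                 prob_space.variance M (\<lambda>\<omega>. \<Sum>l\<in>L. released y h \<eta> l \<omega>)
                   \<le> (real k + 2 * (log 2 (2 ^ h) - 1)) * (2 * \<Delta>\<^sup>2 / \<epsilon>\<^sup>2))))"
  
proof -
  let ?b = "\<Delta> / \<epsilon>"
  have b: "?b > 0" using assms(2,3) by simp
  have sig: "real m * (2 * ?b\<^sup>2) = real m * (2 * \<Delta>\<^sup>2 / \<epsilon>\<^sup>2)" for m
    by (simp add: power_divide)
  have lg: "log 2 (2 ^ h) = real h" by simp
  have h2: "(2::nat) ^ h div 2 = 2 ^ (h - 1)" using assms(1)
    by (metis One_nat_def Suc_pred div_mult_self1_is_m le_numeral_extra(1) less_le_trans mult.commute
        numeral_2_eq_2 pos2 power_Suc zero_less_Suc zero_less_numeral)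
  have g1: "1 \<le> h - 1" "h - 1 \<le> h" using assms(1) by auto
  have s: "0 \<le> 2 * \<Delta>\<^sup>2 / \<epsilon>\<^sup>2" by simp
  have A: "\<exists>L. finite L \<and> L \<subseteq> {l. valid_label h l} \<and>
               prob_space.expectation M (\<lambda>\<omega>. \<Sum>l\<in>L. released y h \<eta> l \<omega>) = (\<Sum>t\<in>{a..<a+n}. y t) \<and>
               prob_space.variance M (\<lambda>\<omega>. \<Sum>l\<in>L. released y h \<eta> l \<omega>)
                 \<le> (2 * (log 2 (2 ^ h) - 1)) * (2 * \<Delta>\<^sup>2 / \<epsilon>\<^sup>2)"
    if n: "n \<le> 2 ^ h div 2"
  proof -
    obtain D where D: "dec h D {a - 1 ..< a - 1 + n}" "card D \<le> 2 * (h - 1)"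
      using dec_main1[OF g1, of n "a - 1"] n h2 by auto
    obtain L where L: "finite L \<and> L \<subseteq> {l. valid_label h l} \<and>
     prob_space.expectation M (\<lambda>\<omega>. \<Sum>l\<in>L. released y h \<eta> l \<omega>) = (\<Sum>t\<in>{a..<a+n}. y t) \<and>
     prob_space.variance M (\<lambda>\<omega>. \<Sum>l\<in>L. released y h \<eta> l \<omega>) = real (card D) * (2 * ?b\<^sup>2)"
      using finish[OF D(1) assms(5) b assms(6,7)] assms(8) by blast
    have "real (card D) \<le> 2 * (log 2 (2 ^ h) - 1)"
      using D(2) assms(1) unfolding lg by (simp add: of_nat_diff)
    then have "real (card D) * (2 * ?b\<^sup>2) \<le> (2 * (log 2 (2 ^ h) - 1)) * (2 * \<Delta>\<^sup>2 / \<epsilon>\<^sup>2)"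
      unfolding sig by (rule mult_right_mono[OF _ s])
    then show ?thesis using L by (intro exI[of _ L]) auto
  qed
  have B: "\<exists>L. finite L \<and> L \<subseteq> {l. valid_label h l} \<and>
                 prob_space.expectation M (\<lambda>\<omega>. \<Sum>l\<in>L. released y h \<eta> l \<omega>) = (\<Sum>t\<in>{a..<a+n}. y t) \<and>
                 prob_space.variance M (\<lambda>\<omega>. \<Sum>l\<in>L. released y h \<eta> l \<omega>)
                   \<le> (real k + 2 * (log 2 (2 ^ h) - 1)) * (2 * \<Delta>\<^sup>2 / \<epsilon>\<^sup>2)"
    if kR: "n = k * (2 ^ h div 2) + R" "1 \<le> k" "R < 2 ^ h div 2" for k R
  proof -
    obtain D where D: "dec h D {a - 1 ..< a - 1 + n}" "card D \<le> k + 2 * (h - 1)"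
      using dec_main2[OF g1, of n k R "a - 1"] kR h2 by auto
    obtain L where L: "finite L \<and> L \<subseteq> {l. valid_label h l} \<and>
     prob_space.expectation M (\<lambda>\<omega>. \<Sum>l\<in>L. released y h \<eta> l \<omega>) = (\<Sum>t\<in>{a..<a+n}. y t) \<and>
     prob_space.variance M (\<lambda>\<omega>. \<Sum>l\<in>L. released y h \<eta> l \<omega>) = real (card D) * (2 * ?b\<^sup>2)"
      using finish[OF D(1) assms(5) b assms(6,7)] assms(8) by blast
    have "real (card D) \<le> real k + 2 * (log 2 (2 ^ h) - 1)"
      using D(2) assms(1) unfolding lg by (simp add: of_nat_diff)
    then have "real (card D) * (2 * ?b\<^sup>2) \<le> (real k + 2 * (log 2 (2 ^ h) - 1)) * (2 * \<Delta>\<^sup>2 / \<epsilon>\<^sup>2)"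
      unfolding sig by (rule mult_right_mono[OF _ s])
    then show ?thesis using L by (intro exI[of _ L]) auto
  qed
  show ?thesis using A B by blast
qed

end
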